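(* Let $H_1$, $G_L$, the Coxeter generators $a_1,\dots,a_5,a_{1'}$ and the labels $1,\dots,6,\overline1,\dots,\overline6$ of $G_L\backslash H_1$ be as in the context, with $H_1$ acting on $G_L\backslash H_1$ by right multiplication. Then: (a) for $1\le k\le 5$, the generator $a_k$ exchanges the coset labeled $k$ with the coset labeled $k+1$, exchanges $\overline{k}$ with $\overline{k+1}$, and fixes the other cosets; (b) the generator $a_{1'}$ exchanges the coset labeled $1$ with the coset labeled $\overline2$, exchanges $\overline1$ with $2$, and fixes the other cosets.
   Context: Let $V=\{(A,B,C,D,E,F,G)^T\in\mathbb{C}^7: E+F+G-A-B-C-D=1\}$. A transposition $(ij)\in S_7$ is identified with the $7\times7$ permutation matrix swapping coordinates $i$ and $j$. Let $X_1\in GL(7,\mathbb{C})$ have rows $e_1$, $-e_3+e_5$, $-e_2+e_5$, $e_4$, $e_5$, $-e_2-e_3+e_5+e_6$, $-e_2-e_3+e_5+e_7$, so that for $\vec x\in V$, $X_1\vec x=(A,E-C,E-B,D,E,1+A+D-G,1+A+D-F)^T$. Let $H_1=\langle(12),(23),(34),(56),(67),X_1\rangle\cong W(D_6)$, with Coxeter generators $a_1=(23),a_2=(34),a_3=X_1,a_4=(56),a_5=(67),a_{1'}=(14)$. Let $G_L=\langle(12),(23),(34),(67),(57)X_1(57)\rangle$ (index 12 in $H_1$). The 12 right cosets of $G_L$ in $H_1$ are labeled as follows: the coset labeled $\sigma$ is $G_L\beta_\sigma$, where $\beta_\sigma\in H_1$ satisfies $\beta_\sigma\vec x=u_\sigma$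 for all $\vec x\in V$, with $u_6=(A,B,C,D,G,F,E)$, $u_5=(A,B,C,D,F,E,G)$, $u_4=(A,B,C,D,E,F,G)$, $u_3=(A,1+A-E,1+A-F,1+A-G,1+A-D,1+A-B,1+A-C)$, $u_2=(A,1+A-E,1+A-F,1+A-G,1+A-C,1+A-B,1+A-D)$, $u_1=(A,1+A-E,1+A-F,1+A-G,1+A-B,1+A-C,1+A-D)$, $u_{\overline6}=(1-A,1-B,1-C,1-D,2-G,2-F,2-E)$, $u_{\overline5}=(1-A,1-B,1-C,1-D,2-F,2-E,2-G)$, $u_{\overline4}=(1-A,1-B,1-C,1-D,2-E,2-F,2-G)$, $u_{\overline3}=(1-A,E-A,F-A,G-A,1+D-A,1+B-A,1+C-A)$, $u_{\overline2}=(1-A,E-A,F-A,G-A,1+C-A,1+B-A,1+D-A)$, $u_{\overline1}=(1-A,E-A,F-A,G-A,1+B-A,1+C-A,1+D-A)$ (all transposed to column vectors). An involution $s\in H_1$ acts by $s(G_L\beta)=G_L\beta s$. *)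

theory Defs
  imports "HOL-Analysis.Analysis"
begin

text \<open>Coordinates of C^7 are indexed by the numeral type 7; the paper's (1-based)
coordinate n (n = 1..7, i.e. A,...,G) is the index idx n.\<close>

type_synonym vec7 = "complex ^ 7"
type_synonym mat7 = "complex ^ 7 ^ 7"

definition idx :: "nat \<Rightarrow> 7" where
  "idx n = of_nat (n - 1)"

definition mk7 :: "complex \<Rightarrow> complex \<Rightarrow> complex \<Rightarrow> complex \<Rightarrow> complex \<Rightarrow> complex \<Rightarrow> complex \<Rightarrow> vec7" where
  "mk7 a b c d e f g = (\<chi> i. if i = idx 1 then a else if i = idx 2 then b else if i = idx 3 then c
      else if i = idx 4 then d else if i = idx 5 then e else if i = idx 6 then f else g)"

definition V :: "vec7 set" where
  "V = {x. x$idx 5 + x$idx 6 + x$idx 7 - x$idx 1 - x$idx 2 - x$idx 3 - x$idx 4 = 1}"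

definition e :: "nat \<Rightarrow> vec7" where
  "e n = axis (idx n) 1"

definition tr :: "nat \<Rightarrow> nat \<Rightarrow> mat7" where
  "tr i j = (\<chi> r c. if c = Transposition.transpose (idx i) (idx j) r then 1 else 0)"

definition X1 :: mat7 where
  "X1 = (\<chi> r. if r = idx 1 then e 1
             else if r = idx 2 then - e 3 + e 5
             else if r = idx 3 then - e 2 + e 5
             else if r = idx 4 then e 4
             else if r = idx 5 then e 5
             else if r = idx 6 then - e 2 - e 3 + e 5 + e 6
             else - e 2 - e 3 + e 5 + e 7)"

inductive_set gen_group :: "mat7 set \<Rightarrow> mat7 set" for S where
  gen_one: "mat 1 \<in> gen_group S"
| gen_base: "s \<in> S \<Longrightarrow> s \<in> gen_group S"
| gen_mult: "a \<in> gen_group S \<Longrightarrow> b \<in> gen_group S \<Longrightarrow> a ** b \<in> gen_group S"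
| gen_inv: "a \<in> gen_group S \<Longrightarrow> matrix_inv a \<in> gen_group S"

definition H1 :: "mat7 set" where
  "H1 = gen_group {tr 1 2, tr 2 3, tr 3 4, tr 5 6, tr 6 7, X1}"

definition GL :: "mat7 set" where
  "GL = gen_group {tr 1 2, tr 2 3, tr 3 4, tr 6 7, tr 5 7 ** X1 ** tr 5 7}"

definition agen :: "nat \<Rightarrow> mat7" where
  "agen k = (if k = 1 then tr 2 3 else if k = 2 then tr 3 4 else if k = 3 then X1
             else if k = 4 then tr 5 6 else tr 6 7)"

definition a1' :: mat7 where
  "a1' = tr 1 4"

datatype lab = Plain nat | Bar nat

definition labels :: "lab set" where
  "labels = Plain ` {1..6} \<union> Bar ` {1..6}"

definition u :: "lab \<Rightarrow> vec7 \<Rightarrow> vec7" where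
  "u \<sigma> x = (let A = x$idx 1; B = x$idx 2; C = x$idx 3; D = x$idx 4;
                 E = x$idx 5; F = x$idx 6; G = x$idx 7 in
    (
     if \<sigma> = Plain 6 then mk7 A B C D G F E else
     if \<sigma> = Plain 5 then mk7 A B C D F E G else
     if \<sigma> = Plain 4 then mk7 A B C D E F G else
     if \<sigma> = Plain 3 then mk7 A (1+A-E) (1+A-F) (1+A-G) (1+A-D) (1+A-B) (1+A-C) else
     if \<sigma> = Plain 2 then mk7 A (1+A-E) (1+A-F) (1+A-G) (1+A-C) (1+A-B) (1+A-D) else
     if \<sigma> = Plain 1 then mk7 A (1+A-E) (1+A-F) (1+A-G) (1+A-B) (1+A-C) (1+A-D) else
     if \<sigma> = Bar 6 then mk7 (1-A) (1-B) (1-C) (1-D) (2-G) (2-F) (2-E) else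
     if \<sigma> = Bar 5 then mk7 (1-A) (1-B) (1-C) (1-D) (2-F) (2-E) (2-G) else
     if \<sigma> = Bar 4 then mk7 (1-A) (1-B) (1-C) (1-D) (2-E) (2-F) (2-G) else
     if \<sigma> = Bar 3 then mk7 (1-A) (E-A) (F-A) (G-A) (1+D-A) (1+B-A) (1+C-A) else
     if \<sigma> = Bar 2 then mk7 (1-A) (E-A) (F-A) (G-A) (1+C-A) (1+B-A) (1+D-A) else
     if \<sigma> = Bar 1 then mk7 (1-A) (E-A) (F-A) (G-A) (1+B-A) (1+C-A) (1+D-A) else
     x))"

text \<open>The right coset labeled sigma: G_L beta_sigma, where beta_sigma \<in> H1 acts on V as u_sigma.
  (beta_sigma is unique, since a linear map is determined by its values on the affine
  hyperplane V, which does not contain 0; so this set is exactly the coset G_L beta_sigma.)\<close>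
definition lcoset :: "lab \<Rightarrow> mat7 set" where
  "lcoset \<sigma> = {g ** \<beta> | g \<beta>. g \<in> GL \<and> \<beta> \<in> H1 \<and> (\<forall>x\<in>V. \<beta> *v x = u \<sigma> x)}"

definition act :: "mat7 \<Rightarrow> mat7 set \<Rightarrow> mat7 set" where
  "act s C = (\<lambda>c. c ** s) ` C"

end

theory Submission imports Defs begin

lemma exhaust_7:
  fixes x :: 7
  shows "x = 0 \<or> x = 1 \<or> x = 2 \<or> x = 3 \<or> x = 4 \<or> x = 5 \<or> x = 6"
proof (induct x)
  case (of_int z)
  then have "z = 0 \<or> z = 1 \<or> z = 2 \<or> z = 3 \<or> z = 4 \<or> z = 5 \<or> z = 6" by fastforce
  then show ?case by auto
qed

lemma UNIV_7: "(UNIV::7 set) = {0,1,2,3,4,5,6}"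
  using exhaust_7 by auto

lemma sum_7: "sum f (UNIV::7 set) = f 0 + f 1 + f 2 + f 3 + f 4 + f 5 + f 6"
  unfolding UNIV_7 by (simp add: ac_simps)

lemma idx_simps[simp]: "idx 1 = 0" "idx (Suc 0) = 0" "idx 2 = 1" "idx 3 = 2" "idx 4 = 3" "idx 5 = 4" "idx 6 = 5" "idx 7 = 6"
  by (simp_all add: idx_def)

lemma dd: "(0::7) \<noteq> 1 \<and> (2::7) \<noteq> 3 \<and> (6::7) \<noteq> 0 \<and> (5::7) \<noteq> 1"
  by simp


lemma mk7_nth[simp]: "mk7 a b c d p q r $ 0 = a" "mk7 a b c d p q r $ 1 = b" "mk7 a b c d p q r $ 2 = c"
  "mk7 a b c d p q r $ 3 = d" "mk7 a b c d p q r $ 4 = p" "mk7 a b c d p q r $ 5 = q" "mk7 a b c d p q r $ 6 = r"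
  by (simp_all add: mk7_def)

lemma mk7_eta: "x = mk7 (x$0) (x$1) (x$2) (x$3) (x$4) (x$5) (x$6)"
proof -
  have "x$i = mk7 (x$0) (x$1) (x$2) (x$3) (x$4) (x$5) (x$6) $ i" for i
    using exhaust_7[of i] by (elim disjE;simp)
  then show ?thesis unfolding vec_eq_iff by blast
qed

lemma mk7_eq[simp]: "(mk7 a b c d p q r = mk7 a' b' c' d' p' q' r') \<longleftrightarrow>
   a = a' \<and> b = b' \<and> c = c' \<and> d = d' \<and> p = p' \<and> q = q' \<and> r = r'"
  apply (rule iffI)
   apply (drule_tac f="\<lambda>v. (v$0, v$1, v$2, v$3, v$4, v$5, v$6)" in arg_cong)
   apply simp
  apply simp
  done

lemma mulv_mk7: "(M::mat7) *v mk7 a b c d p q r = mk7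
  (M$0$0*a + M$0$1*b + M$0$2*c + M$0$3*d + M$0$4*p + M$0$5*q + M$0$6*r)
  (M$1$0*a + M$1$1*b + M$1$2*c + M$1$3*d + M$1$4*p + M$1$5*q + M$1$6*r)
  (M$2$0*a + M$2$1*b + M$2$2*c + M$2$3*d + M$2$4*p + M$2$5*q + M$2$6*r)
  (M$3$0*a + M$3$1*b + M$3$2*c + M$3$3*d + M$3$4*p + M$3$5*q + M$3$6*r)
  (M$4$0*a + M$4$1*b + M$4$2*c + M$4$3*d + M$4$4*p + M$4$5*q + M$4$6*r)
  (M$5$0*a + M$5$1*b + M$5$2*c + M$5$3*d + M$5$4*p + M$5$5*q + M$5$6*r)
  (M$6$0*a + M$6$1*b + M$6$2*c + M$6$3*d + M$6$4*p + M$6$5*q + M$6$6*r)"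
  by (subst mk7_eta) (simp add: matrix_vector_mult_def sum_7)

lemma tr_entry: "tr i j $ r $ c = (if c = Transposition.transpose (idx i) (idx j) r then 1 else 0)"
  by (simp add: tr_def)

lemma e_entry: "e n $ c = (if c = idx n then 1 else 0)"
  by (simp add: e_def axis_def)

lemma X1_rows: "X1 $ 0 = e 1" "X1 $ 1 = - e 3 + e 5" "X1 $ 2 = - e 2 + e 5" "X1 $ 3 = e 4"
   "X1 $ 4 = e 5" "X1 $ 5 = - e 2 - e 3 + e 5 + e 6" "X1 $ 6 = - e 2 - e 3 + e 5 + e 7"
  by (simp_all add: X1_def)

lemmas actsimps = mulv_mk7 tr_entry e_entry X1_rows Transposition.transpose_def

lemma act_tr12[simp]: "tr 1 2 *v mk7 a b c d p q r = mk7 b a c d p q r" by (simp add: actsimps)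
lemma act_tr23[simp]: "tr 2 3 *v mk7 a b c d p q r = mk7 a c b d p q r" by (simp add: actsimps)
lemma act_tr34[simp]: "tr 3 4 *v mk7 a b c d p q r = mk7 a b d c p q r" by (simp add: actsimps)
lemma act_tr56[simp]: "tr 5 6 *v mk7 a b c d p q r = mk7 a b c d q p r" by (simp add: actsimps)
lemma act_tr67[simp]: "tr 6 7 *v mk7 a b c d p q r = mk7 a b c d p r q" by (simp add: actsimps)
lemma act_tr57[simp]: "tr 5 7 *v mk7 a b c d p q r = mk7 a b c d r q p" by (simp add: actsimps)
lemma act_tr12'[simp]: "tr (Suc 0) 2 *v mk7 a b c d p q r = mk7 b a c d p q r" by (simp add: actsimps)
lemma act_tr14'[simp]: "tr (Suc 0) 4 *v mk7 a b c d p q r = mk7 d b c a p q r" by (simp add: actsimps)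
lemma act_tr14[simp]: "tr 1 4 *v mk7 a b c d p q r = mk7 d b c a p q r" by (simp add: actsimps)
lemma act_X1[simp]: "X1 *v mk7 a b c d p q r = mk7 a (p - c) (p - b) d p (p + q - b - c) (p + r - b - c)"
  by (simp add: actsimps algebra_simps)


declare matrix_vector_mul_assoc[symmetric, simp]

definition Y :: mat7 where "Y = tr 5 7 ** X1 ** tr 5 7"

lemma act_Y[simp]: "Y *v mk7 a b c d p q r = mk7 a (r - c) (r - b) d (r + p - b - c) (r + q - b - c) r"
  by (simp add: Y_def)

lemma mateq: "(\<And>a b c d p q r. A *v mk7 a b c d p q r = B *v mk7 a b c d p q r) \<Longrightarrow> (A::mat7) = B"
  unfolding matrix_eq by (metis mk7_eta)

lemma V_iff: "x \<in> V \<longleftrightarrow> x$4 + x$5 + x$6 - x$0 - x$1 - x$2 - x$3 = 1"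
  by (simp add: V_def)

lemma Vcheck:
  assumes "\<And>a b c d p q. M *v mk7 a b c d p q (1+a+b+c+d-p-q) = u \<sigma> (mk7 a b c d p q (1+a+b+c+d-p-q))"
  shows "\<forall>x\<in>V. M *v x = u \<sigma> x"
proof
  fix x assume "x \<in> V"
  then have "x$6 = 1 + x$0 + x$1 + x$2 + x$3 - x$4 - x$5" by (simp add: V_iff algebra_simps)
  then have "x = mk7 (x$0) (x$1) (x$2) (x$3) (x$4) (x$5) (1 + x$0 + x$1 + x$2 + x$3 - x$4 - x$5)"
    by (metis mk7_eta)
  then show "M *v x = u \<sigma> x" by (metis assms)
qed

lemma eqV:
  assumes "\<forall>x\<in>V. (M::mat7) *v x = u \<sigma> x" "\<forall>x\<in>V. (N::mat7) *v x = u \<sigma> x"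
  shows "M = N"
  unfolding matrix_eq
proof
  fix x :: vec7
  define c where "c = 1 - (x$4 + x$5 + x$6 - x$0 - x$1 - x$2 - x$3)"
  have e5: "e 5 \<in> V" by (simp add: V_iff e_entry)
  have y: "x + c *s e 5 \<in> V" by (simp add: V_iff e_entry c_def)
  have "M *v e 5 = N *v e 5" using assms e5 by simp
  moreover have "M *v (x + c *s e 5) = N *v (x + c *s e 5)" using assms y by simp
  ultimately show "M *v x = N *v x"
    by (simp add: matrix_vector_right_distrib vector_scalar_commute)
qed

lemma lcoset_eq:
  assumes "W \<in> H1" "\<forall>x\<in>V. W *v x = u \<sigma> x"
  shows "lcoset \<sigma> = {g ** W | g. g \<in> GL}"
  unfolding lcoset_def using assms eqV[OF assms(2)] by blast

lemma inv_gen: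
  assumes "\<And>s. s \<in> S \<Longrightarrow> invertible s" "a \<in> gen_group S"
  shows "invertible (a::mat7)"
  using assms(2)
proof induction
  case gen_one then show ?case unfolding invertible_def by (intro exI[of _ "mat 1"]) simp
next
  case (gen_base s) then show ?case by (rule assms(1))
next
  case (gen_mult a b)
  then obtain a' b' where "a ** a' = mat 1" "a' ** a = mat 1" "b ** b' = mat 1" "b' ** b = mat 1"
    unfolding invertible_def by blast
  then have "(a ** b) ** (b' ** a') = mat 1" "(b' ** a') ** (a ** b) = mat 1"
    by (metis matrix_mul_assoc matrix_mul_rid)+
  then show ?case unfolding invertible_def by blast
next
  case (gen_inv a)
  then have "a ** matrix_inv a = mat 1 \<and> matrix_inv a ** a = mat 1"
    unfolding invertible_def matrix_inv_def using someI_ex[of "\<lambda>A'. a ** A' = mat 1 \<and> A' ** a = mat 1"] by blast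
  then show ?case unfolding invertible_def by blast
qed

lemma invol_inv: "(M::mat7) ** M = mat 1 \<Longrightarrow> invertible M"
  unfolding invertible_def by blast

lemma GL_inv: "h \<in> GL \<Longrightarrow> invertible h"
  unfolding GL_def Y_def[symmetric]
  apply (erule inv_gen[rotated])
  apply (elim insertE emptyE; hypsubst; rule invol_inv; rule mateq; simp)
  done

lemma key:
  assumes W1: "Ws \<in> H1" "\<forall>x\<in>V. Ws *v x = u \<sigma> x"
    and W2: "Wt \<in> H1" "\<forall>x\<in>V. Wt *v x = u \<tau> x"
    and h: "h \<in> GL" and eq: "Ws ** s = h ** Wt"
  shows "act s (lcoset \<sigma>) = lcoset \<tau>"
proof -
  have hi: "matrix_inv h ** h = mat 1"
    using GL_inv[OF h] unfolding invertible_def matrix_inv_def by (rule someI2_ex) blast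
  have hi': "matrix_inv h ** (h ** X) = X" for X by (simp add: matrix_mul_assoc hi)
  have hinv: "matrix_inv h \<in> GL" unfolding GL_def by (rule gen_group.gen_inv) (use h in \<open>simp add: GL_def\<close>)
  have hm: "g ** h \<in> GL" if "g \<in> GL" for g
    using that h unfolding GL_def by (rule gen_group.gen_mult)
  have hm2: "g ** matrix_inv h \<in> GL" if "g \<in> GL" for g
    using that hinv unfolding GL_def by (rule gen_group.gen_mult)
  have "act s (lcoset \<sigma>) = {g ** Ws ** s | g. g \<in> GL}"
    unfolding lcoset_eq[OF W1] act_def by blast
  also have "\<dots> = {g ** Wt | g. g \<in> GL}"
  proof (intro set_eqI iffI)
    fix m assume "m \<in> {g ** Ws ** s | g. g \<in> GL}"
    then obtain g where "g \<in> GL" "m = g ** Ws ** s" by blast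
    then have "m = (g ** h) ** Wt" by (simp add: eq flip: matrix_mul_assoc)
    then show "m \<in> {g ** Wt | g. g \<in> GL}" using hm[OF \<open>g \<in> GL\<close>] by blast
  next
    fix m assume "m \<in> {g ** Wt | g. g \<in> GL}"
    then obtain g where "g \<in> GL" "m = g ** Wt" by blast
    then have "m = (g ** matrix_inv h) ** Ws ** s"
      by (simp add: eq hi' flip: matrix_mul_assoc)
    then show "m \<in> {g ** Ws ** s | g. g \<in> GL}" using hm2[OF \<open>g \<in> GL\<close>] by blast
  qed
  also have "\<dots> = lcoset \<tau>" using lcoset_eq[OF W2] by simp
  finally show ?thesis .
qed

definition WP1 :: mat7 where "WP1 = X1 ** tr 3 4 ** tr 2 3 ** tr 5 6 ** tr 6 7 ** X1 ** tr 3 4 ** tr 5 6 ** X1"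
lemma WP1_H1: "WP1 \<in> H1" unfolding WP1_def H1_def by (intro gen_group.gen_one gen_group.gen_mult gen_group.gen_base;simp)
lemma WP1_u: "\<forall>x\<in>V. WP1 *v x = u (Plain 1) x" unfolding WP1_def by (rule Vcheck) (simp add: u_def Let_def algebra_simps)

definition WP2 :: mat7 where "WP2 = tr 5 6 ** X1 ** tr 3 4 ** tr 2 3 ** tr 5 6 ** tr 6 7 ** X1 ** tr 3 4 ** tr 5 6 ** X1"
lemma WP2_H1: "WP2 \<in> H1" unfolding WP2_def H1_def by (intro gen_group.gen_one gen_group.gen_mult gen_group.gen_base;simp)
lemma WP2_u: "\<forall>x\<in>V. WP2 *v x = u (Plain 2) x" unfolding WP2_def by (rule Vcheck) (simp add: u_def Let_def algebra_simps)

definition WP3 :: mat7 where "WP3 = tr 5 6 ** tr 6 7 ** X1 ** tr 3 4 ** tr 2 3 ** tr 5 6 ** tr 6 7 ** X1 ** tr 3 4 ** tr 5 6 ** X1"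
lemma WP3_H1: "WP3 \<in> H1" unfolding WP3_def H1_def by (intro gen_group.gen_one gen_group.gen_mult gen_group.gen_base;simp)
lemma WP3_u: "\<forall>x\<in>V. WP3 *v x = u (Plain 3) x" unfolding WP3_def by (rule Vcheck) (simp add: u_def Let_def algebra_simps)

definition WP4 :: mat7 where "WP4 = mat 1"
lemma WP4_H1: "WP4 \<in> H1" unfolding WP4_def H1_def by (intro gen_group.gen_one gen_group.gen_mult gen_group.gen_base;simp)
lemma WP4_u: "\<forall>x\<in>V. WP4 *v x = u (Plain 4) x" unfolding WP4_def by (rule Vcheck) (simp add: u_def Let_def algebra_simps)

definition WP5 :: mat7 where "WP5 = tr 5 6"
lemma WP5_H1: "WP5 \<in> H1" unfolding WP5_def H1_def by (intro gen_group.gen_one gen_group.gen_mult gen_group.gen_base;simp)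
lemma WP5_u: "\<forall>x\<in>V. WP5 *v x = u (Plain 5) x" unfolding WP5_def by (rule Vcheck) (simp add: u_def Let_def algebra_simps)

definition WP6 :: mat7 where "WP6 = tr 5 6 ** tr 6 7 ** tr 5 6"
lemma WP6_H1: "WP6 \<in> H1" unfolding WP6_def H1_def by (intro gen_group.gen_one gen_group.gen_mult gen_group.gen_base;simp)
lemma WP6_u: "\<forall>x\<in>V. WP6 *v x = u (Plain 6) x" unfolding WP6_def by (rule Vcheck) (simp add: u_def Let_def algebra_simps)

definition WB1 :: mat7 where "WB1 = tr 1 2 ** tr 2 3 ** tr 6 7 ** X1 ** tr 1 2 ** tr 2 3 ** tr 3 4 ** tr 5 6 ** tr 6 7 ** X1 ** tr 3 4 ** tr 5 6 ** tr 6 7 ** X1 ** tr 1 2"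
lemma WB1_H1: "WB1 \<in> H1" unfolding WB1_def H1_def by (intro gen_group.gen_one gen_group.gen_mult gen_group.gen_base;simp)
lemma WB1_u: "\<forall>x\<in>V. WB1 *v x = u (Bar 1) x" unfolding WB1_def by (rule Vcheck) (simp add: u_def Let_def algebra_simps)

definition WB2 :: mat7 where "WB2 = tr 1 2 ** tr 3 4 ** X1 ** tr 3 4 ** tr 2 3 ** tr 5 6 ** tr 6 7 ** X1 ** tr 1 2 ** tr 2 3 ** tr 5 6 ** X1 ** tr 1 2 ** tr 3 4"
lemma WB2_H1: "WB2 \<in> H1" unfolding WB2_def H1_def by (intro gen_group.gen_one gen_group.gen_mult gen_group.gen_base;simp)
lemma WB2_u: "\<forall>x\<in>V. WB2 *v x = u (Bar 2) x" unfolding WB2_def by (rule Vcheck) (simp add: u_def Let_def algebra_simps)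

definition WB3 :: mat7 where "WB3 = tr 1 2 ** tr 3 4 ** X1 ** tr 3 4 ** tr 2 3 ** tr 5 6 ** tr 6 7 ** X1 ** tr 1 2 ** tr 2 3 ** tr 5 6 ** X1 ** tr 1 2"
lemma WB3_H1: "WB3 \<in> H1" unfolding WB3_def H1_def by (intro gen_group.gen_one gen_group.gen_mult gen_group.gen_base;simp)
lemma WB3_u: "\<forall>x\<in>V. WB3 *v x = u (Bar 3) x" unfolding WB3_def by (rule Vcheck) (simp add: u_def Let_def algebra_simps)

definition WB4 :: mat7 where "WB4 = tr 1 2 ** tr 2 3 ** tr 5 6 ** tr 6 7 ** tr 5 6 ** X1 ** tr 1 2 ** tr 3 4 ** tr 2 3 ** tr 5 6 ** tr 6 7 ** X1 ** tr 1 2 ** tr 3 4 ** tr 5 6 ** tr 6 7 ** X1 ** tr 1 2 ** tr 3 4 ** tr 5 6 ** X1 ** tr 3 4"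
lemma WB4_H1: "WB4 \<in> H1" unfolding WB4_def H1_def by (intro gen_group.gen_one gen_group.gen_mult gen_group.gen_base;simp)
lemma WB4_u: "\<forall>x\<in>V. WB4 *v x = u (Bar 4) x" unfolding WB4_def by (rule Vcheck) (simp add: u_def Let_def algebra_simps)

definition WB5 :: mat7 where "WB5 = tr 1 2 ** tr 2 3 ** tr 6 7 ** tr 5 6 ** X1 ** tr 1 2 ** tr 3 4 ** tr 2 3 ** tr 5 6 ** tr 6 7 ** X1 ** tr 1 2 ** tr 3 4 ** tr 5 6 ** tr 6 7 ** X1 ** tr 1 2 ** tr 3 4 ** tr 5 6 ** X1 ** tr 3 4"
lemma WB5_H1: "WB5 \<in> H1" unfolding WB5_def H1_def by (intro gen_group.gen_one gen_group.gen_mult gen_group.gen_base;simp)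
lemma WB5_u: "\<forall>x\<in>V. WB5 *v x = u (Bar 5) x" unfolding WB5_def by (rule Vcheck) (simp add: u_def Let_def algebra_simps)

definition WB6 :: mat7 where "WB6 = tr 1 2 ** tr 2 3 ** X1 ** tr 1 2 ** tr 3 4 ** tr 2 3 ** tr 5 6 ** tr 6 7 ** X1 ** tr 1 2 ** tr 3 4 ** tr 5 6 ** tr 6 7 ** X1 ** tr 1 2 ** tr 3 4 ** tr 5 6 ** X1 ** tr 3 4"
lemma WB6_H1: "WB6 \<in> H1" unfolding WB6_def H1_def by (intro gen_group.gen_one gen_group.gen_mult gen_group.gen_base;simp)
lemma WB6_u: "\<forall>x\<in>V. WB6 *v x = u (Bar 6) x" unfolding WB6_def by (rule Vcheck) (simp add: u_def Let_def algebra_simps)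

lemma c_a1_P1: "act (tr 2 3) (lcoset (Plain 1)) = lcoset (Plain 2)"
  apply (rule key[OF WP1_H1 WP1_u WP2_H1 WP2_u, of "mat 1"])
   apply (unfold GL_def Y_def[symmetric]; intro gen_group.gen_one gen_group.gen_mult gen_group.gen_base; simp)
  unfolding WP1_def WP2_def by (rule mateq) (simp add: algebra_simps)
lemma c_a1_P2: "act (tr 2 3) (lcoset (Plain 2)) = lcoset (Plain 1)"
  apply (rule key[OF WP2_H1 WP2_u WP1_H1 WP1_u, of "mat 1"])
   apply (unfold GL_def Y_def[symmetric]; intro gen_group.gen_one gen_group.gen_mult gen_group.gen_base; simp)
  unfolding WP2_def WP1_def by (rule mateq) (simp add: algebra_simps)
lemma c_a1_P3: "act (tr 2 3) (lcoset (Plain 3)) = lcoset (Plain 3)"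
  apply (rule key[OF WP3_H1 WP3_u WP3_H1 WP3_u, of "tr 6 7"])
   apply (unfold GL_def Y_def[symmetric]; intro gen_group.gen_one gen_group.gen_mult gen_group.gen_base; simp)
  unfolding WP3_def WP3_def by (rule mateq) (simp add: algebra_simps)
lemma c_a1_P4: "act (tr 2 3) (lcoset (Plain 4)) = lcoset (Plain 4)"
  apply (rule key[OF WP4_H1 WP4_u WP4_H1 WP4_u, of "tr 2 3"])
   apply (unfold GL_def Y_def[symmetric]; intro gen_group.gen_one gen_group.gen_mult gen_group.gen_base; simp)
  unfolding WP4_def WP4_def by (rule mateq) (simp add: algebra_simps)
lemma c_a1_P5: "act (tr 2 3) (lcoset (Plain 5)) = lcoset (Plain 5)"
  apply (rule key[OF WP5_H1 WP5_u WP5_H1 WP5_u, of "tr 2 3"])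
   apply (unfold GL_def Y_def[symmetric]; intro gen_group.gen_one gen_group.gen_mult gen_group.gen_base; simp)
  unfolding WP5_def WP5_def by (rule mateq) (simp add: algebra_simps)
lemma c_a1_P6: "act (tr 2 3) (lcoset (Plain 6)) = lcoset (Plain 6)"
  apply (rule key[OF WP6_H1 WP6_u WP6_H1 WP6_u, of "tr 2 3"])
   apply (unfold GL_def Y_def[symmetric]; intro gen_group.gen_one gen_group.gen_mult gen_group.gen_base; simp)
  unfolding WP6_def WP6_def by (rule mateq) (simp add: algebra_simps)
lemma c_a1_B1: "act (tr 2 3) (lcoset (Bar 1)) = lcoset (Bar 2)"
  apply (rule key[OF WB1_H1 WB1_u WB2_H1 WB2_u, of "mat 1"])
   apply (unfold GL_def Y_def[symmetric]; intro gen_group.gen_one gen_group.gen_mult gen_group.gen_base; simp)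
  unfolding WB1_def WB2_def by (rule mateq) (simp add: algebra_simps)
lemma c_a1_B2: "act (tr 2 3) (lcoset (Bar 2)) = lcoset (Bar 1)"
  apply (rule key[OF WB2_H1 WB2_u WB1_H1 WB1_u, of "mat 1"])
   apply (unfold GL_def Y_def[symmetric]; intro gen_group.gen_one gen_group.gen_mult gen_group.gen_base; simp)
  unfolding WB2_def WB1_def by (rule mateq) (simp add: algebra_simps)
lemma c_a1_B3: "act (tr 2 3) (lcoset (Bar 3)) = lcoset (Bar 3)"
  apply (rule key[OF WB3_H1 WB3_u WB3_H1 WB3_u, of "tr 6 7"])
   apply (unfold GL_def Y_def[symmetric]; intro gen_group.gen_one gen_group.gen_mult gen_group.gen_base; simp)
  unfolding WB3_def WB3_def by (rule mateq) (simp add: algebra_simps)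
lemma c_a1_B4: "act (tr 2 3) (lcoset (Bar 4)) = lcoset (Bar 4)"
  apply (rule key[OF WB4_H1 WB4_u WB4_H1 WB4_u, of "tr 2 3"])
   apply (unfold GL_def Y_def[symmetric]; intro gen_group.gen_one gen_group.gen_mult gen_group.gen_base; simp)
  unfolding WB4_def WB4_def by (rule mateq) (simp add: algebra_simps)
lemma c_a1_B5: "act (tr 2 3) (lcoset (Bar 5)) = lcoset (Bar 5)"
  apply (rule key[OF WB5_H1 WB5_u WB5_H1 WB5_u, of "tr 2 3"])
   apply (unfold GL_def Y_def[symmetric]; intro gen_group.gen_one gen_group.gen_mult gen_group.gen_base; simp)
  unfolding WB5_def WB5_def by (rule mateq) (simp add: algebra_simps)
lemma c_a1_B6: "act (tr 2 3) (lcoset (Bar 6)) = lcoset (Bar 6)"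
  apply (rule key[OF WB6_H1 WB6_u WB6_H1 WB6_u, of "tr 2 3"])
   apply (unfold GL_def Y_def[symmetric]; intro gen_group.gen_one gen_group.gen_mult gen_group.gen_base; simp)
  unfolding WB6_def WB6_def by (rule mateq) (simp add: algebra_simps)
lemma c_a2_P1: "act (tr 3 4) (lcoset (Plain 1)) = lcoset (Plain 1)"
  apply (rule key[OF WP1_H1 WP1_u WP1_H1 WP1_u, of "tr 6 7"])
   apply (unfold GL_def Y_def[symmetric]; intro gen_group.gen_one gen_group.gen_mult gen_group.gen_base; simp)
  unfolding WP1_def WP1_def by (rule mateq) (simp add: algebra_simps)
lemma c_a2_P2: "act (tr 3 4) (lcoset (Plain 2)) = lcoset (Plain 3)"
  apply (rule key[OF WP2_H1 WP2_u WP3_H1 WP3_u, of "mat 1"])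
   apply (unfold GL_def Y_def[symmetric]; intro gen_group.gen_one gen_group.gen_mult gen_group.gen_base; simp)
  unfolding WP2_def WP3_def by (rule mateq) (simp add: algebra_simps)
lemma c_a2_P3: "act (tr 3 4) (lcoset (Plain 3)) = lcoset (Plain 2)"
  apply (rule key[OF WP3_H1 WP3_u WP2_H1 WP2_u, of "mat 1"])
   apply (unfold GL_def Y_def[symmetric]; intro gen_group.gen_one gen_group.gen_mult gen_group.gen_base; simp)
  unfolding WP3_def WP2_def by (rule mateq) (simp add: algebra_simps)
lemma c_a2_P4: "act (tr 3 4) (lcoset (Plain 4)) = lcoset (Plain 4)"
  apply (rule key[OF WP4_H1 WP4_u WP4_H1 WP4_u, of "tr 3 4"])
   apply (unfold GL_def Y_def[symmetric]; intro gen_group.gen_one gen_group.gen_mult gen_group.gen_base; simp)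
  unfolding WP4_def WP4_def by (rule mateq) (simp add: algebra_simps)
lemma c_a2_P5: "act (tr 3 4) (lcoset (Plain 5)) = lcoset (Plain 5)"
  apply (rule key[OF WP5_H1 WP5_u WP5_H1 WP5_u, of "tr 3 4"])
   apply (unfold GL_def Y_def[symmetric]; intro gen_group.gen_one gen_group.gen_mult gen_group.gen_base; simp)
  unfolding WP5_def WP5_def by (rule mateq) (simp add: algebra_simps)
lemma c_a2_P6: "act (tr 3 4) (lcoset (Plain 6)) = lcoset (Plain 6)"
  apply (rule key[OF WP6_H1 WP6_u WP6_H1 WP6_u, of "tr 3 4"])
   apply (unfold GL_def Y_def[symmetric]; intro gen_group.gen_one gen_group.gen_mult gen_group.gen_base; simp)
  unfolding WP6_def WP6_def by (rule mateq) (simp add: algebra_simps)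
lemma c_a2_B1: "act (tr 3 4) (lcoset (Bar 1)) = lcoset (Bar 1)"
  apply (rule key[OF WB1_H1 WB1_u WB1_H1 WB1_u, of "tr 6 7"])
   apply (unfold GL_def Y_def[symmetric]; intro gen_group.gen_one gen_group.gen_mult gen_group.gen_base; simp)
  unfolding WB1_def WB1_def by (rule mateq) (simp add: algebra_simps)
lemma c_a2_B2: "act (tr 3 4) (lcoset (Bar 2)) = lcoset (Bar 3)"
  apply (rule key[OF WB2_H1 WB2_u WB3_H1 WB3_u, of "mat 1"])
   apply (unfold GL_def Y_def[symmetric]; intro gen_group.gen_one gen_group.gen_mult gen_group.gen_base; simp)
  unfolding WB2_def WB3_def by (rule mateq) (simp add: algebra_simps)
lemma c_a2_B3: "act (tr 3 4) (lcoset (Bar 3)) = lcoset (Bar 2)"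
  apply (rule key[OF WB3_H1 WB3_u WB2_H1 WB2_u, of "mat 1"])
   apply (unfold GL_def Y_def[symmetric]; intro gen_group.gen_one gen_group.gen_mult gen_group.gen_base; simp)
  unfolding WB3_def WB2_def by (rule mateq) (simp add: algebra_simps)
lemma c_a2_B4: "act (tr 3 4) (lcoset (Bar 4)) = lcoset (Bar 4)"
  apply (rule key[OF WB4_H1 WB4_u WB4_H1 WB4_u, of "tr 3 4"])
   apply (unfold GL_def Y_def[symmetric]; intro gen_group.gen_one gen_group.gen_mult gen_group.gen_base; simp)
  unfolding WB4_def WB4_def by (rule mateq) (simp add: algebra_simps)
lemma c_a2_B5: "act (tr 3 4) (lcoset (Bar 5)) = lcoset (Bar 5)"
  apply (rule key[OF WB5_H1 WB5_u WB5_H1 WB5_u, of "tr 3 4"])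
   apply (unfold GL_def Y_def[symmetric]; intro gen_group.gen_one gen_group.gen_mult gen_group.gen_base; simp)
  unfolding WB5_def WB5_def by (rule mateq) (simp add: algebra_simps)
lemma c_a2_B6: "act (tr 3 4) (lcoset (Bar 6)) = lcoset (Bar 6)"
  apply (rule key[OF WB6_H1 WB6_u WB6_H1 WB6_u, of "tr 3 4"])
   apply (unfold GL_def Y_def[symmetric]; intro gen_group.gen_one gen_group.gen_mult gen_group.gen_base; simp)
  unfolding WB6_def WB6_def by (rule mateq) (simp add: algebra_simps)
lemma c_a3_P1: "act (X1) (lcoset (Plain 1)) = lcoset (Plain 1)"
  apply (rule key[OF WP1_H1 WP1_u WP1_H1 WP1_u, of "tr 2 3 ** tr 3 4 ** Y ** tr 3 4 ** tr 2 3"])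
   apply (unfold GL_def Y_def[symmetric]; intro gen_group.gen_one gen_group.gen_mult gen_group.gen_base; simp)
  unfolding WP1_def WP1_def by (rule mateq) (simp add: algebra_simps)
lemma c_a3_P2: "act (X1) (lcoset (Plain 2)) = lcoset (Plain 2)"
  apply (rule key[OF WP2_H1 WP2_u WP2_H1 WP2_u, of "tr 2 3 ** tr 3 4 ** Y ** tr 3 4 ** tr 2 3"])
   apply (unfold GL_def Y_def[symmetric]; intro gen_group.gen_one gen_group.gen_mult gen_group.gen_base; simp)
  unfolding WP2_def WP2_def by (rule mateq) (simp add: algebra_simps)
lemma c_a3_P3: "act (X1) (lcoset (Plain 3)) = lcoset (Plain 4)"
  apply (rule key[OF WP3_H1 WP3_u WP4_H1 WP4_u, of "tr 3 4 ** tr 6 7 ** Y ** tr 3 4 ** tr 2 3 ** tr 6 7 ** Y ** tr 3 4"])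
   apply (unfold GL_def Y_def[symmetric]; intro gen_group.gen_one gen_group.gen_mult gen_group.gen_base; simp)
  unfolding WP3_def WP4_def by (rule mateq) (simp add: algebra_simps)
lemma c_a3_P4: "act (X1) (lcoset (Plain 4)) = lcoset (Plain 3)"
  apply (rule key[OF WP4_H1 WP4_u WP3_H1 WP3_u, of "tr 2 3 ** tr 3 4 ** tr 2 3 ** tr 6 7 ** Y ** tr 3 4 ** tr 6 7 ** Y"])
   apply (unfold GL_def Y_def[symmetric]; intro gen_group.gen_one gen_group.gen_mult gen_group.gen_base; simp)
  unfolding WP4_def WP3_def by (rule mateq) (simp add: algebra_simps)
lemma c_a3_P5: "act (X1) (lcoset (Plain 5)) = lcoset (Plain 5)"
  apply (rule key[OF WP5_H1 WP5_u WP5_H1 WP5_u, of "tr 6 7 ** Y ** tr 6 7"])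
   apply (unfold GL_def Y_def[symmetric]; intro gen_group.gen_one gen_group.gen_mult gen_group.gen_base; simp)
  unfolding WP5_def WP5_def by (rule mateq) (simp add: algebra_simps)
lemma c_a3_P6: "act (X1) (lcoset (Plain 6)) = lcoset (Plain 6)"
  apply (rule key[OF WP6_H1 WP6_u WP6_H1 WP6_u, of "Y"])
   apply (unfold GL_def Y_def[symmetric]; intro gen_group.gen_one gen_group.gen_mult gen_group.gen_base; simp)
  unfolding WP6_def WP6_def by (rule mateq) (simp add: algebra_simps)
lemma c_a3_B1: "act (X1) (lcoset (Bar 1)) = lcoset (Bar 1)"
  apply (rule key[OF WB1_H1 WB1_u WB1_H1 WB1_u, of "tr 2 3 ** tr 3 4 ** Y ** tr 3 4 ** tr 2 3"])
   apply (unfold GL_def Y_def[symmetric]; intro gen_group.gen_one gen_group.gen_mult gen_group.gen_base; simp)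
  unfolding WB1_def WB1_def by (rule mateq) (simp add: algebra_simps)
lemma c_a3_B2: "act (X1) (lcoset (Bar 2)) = lcoset (Bar 2)"
  apply (rule key[OF WB2_H1 WB2_u WB2_H1 WB2_u, of "tr 2 3 ** tr 3 4 ** Y ** tr 3 4 ** tr 2 3"])
   apply (unfold GL_def Y_def[symmetric]; intro gen_group.gen_one gen_group.gen_mult gen_group.gen_base; simp)
  unfolding WB2_def WB2_def by (rule mateq) (simp add: algebra_simps)
lemma c_a3_B3: "act (X1) (lcoset (Bar 3)) = lcoset (Bar 4)"
  apply (rule key[OF WB3_H1 WB3_u WB4_H1 WB4_u, of "tr 3 4 ** tr 6 7 ** Y ** tr 3 4 ** tr 2 3 ** tr 6 7 ** Y ** tr 3 4"])
   apply (unfold GL_def Y_def[symmetric]; intro gen_group.gen_one gen_group.gen_mult gen_group.gen_base; simp)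
  unfolding WB3_def WB4_def by (rule mateq) (simp add: algebra_simps)
lemma c_a3_B4: "act (X1) (lcoset (Bar 4)) = lcoset (Bar 3)"
  apply (rule key[OF WB4_H1 WB4_u WB3_H1 WB3_u, of "tr 2 3 ** tr 3 4 ** tr 2 3 ** tr 6 7 ** Y ** tr 3 4 ** tr 6 7 ** Y"])
   apply (unfold GL_def Y_def[symmetric]; intro gen_group.gen_one gen_group.gen_mult gen_group.gen_base; simp)
  unfolding WB4_def WB3_def by (rule mateq) (simp add: algebra_simps)
lemma c_a3_B5: "act (X1) (lcoset (Bar 5)) = lcoset (Bar 5)"
  apply (rule key[OF WB5_H1 WB5_u WB5_H1 WB5_u, of "tr 6 7 ** Y ** tr 6 7"])
   apply (unfold GL_def Y_def[symmetric]; intro gen_group.gen_one gen_group.gen_mult gen_group.gen_base; simp)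
  unfolding WB5_def WB5_def by (rule mateq) (simp add: algebra_simps)
lemma c_a3_B6: "act (X1) (lcoset (Bar 6)) = lcoset (Bar 6)"
  apply (rule key[OF WB6_H1 WB6_u WB6_H1 WB6_u, of "Y"])
   apply (unfold GL_def Y_def[symmetric]; intro gen_group.gen_one gen_group.gen_mult gen_group.gen_base; simp)
  unfolding WB6_def WB6_def by (rule mateq) (simp add: algebra_simps)
lemma c_a4_P1: "act (tr 5 6) (lcoset (Plain 1)) = lcoset (Plain 1)"
  apply (rule key[OF WP1_H1 WP1_u WP1_H1 WP1_u, of "tr 2 3"])
   apply (unfold GL_def Y_def[symmetric]; intro gen_group.gen_one gen_group.gen_mult gen_group.gen_base; simp)
  unfolding WP1_def WP1_def by (rule mateq) (simp add: algebra_simps)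
lemma c_a4_P2: "act (tr 5 6) (lcoset (Plain 2)) = lcoset (Plain 2)"
  apply (rule key[OF WP2_H1 WP2_u WP2_H1 WP2_u, of "tr 2 3"])
   apply (unfold GL_def Y_def[symmetric]; intro gen_group.gen_one gen_group.gen_mult gen_group.gen_base; simp)
  unfolding WP2_def WP2_def by (rule mateq) (simp add: algebra_simps)
lemma c_a4_P3: "act (tr 5 6) (lcoset (Plain 3)) = lcoset (Plain 3)"
  apply (rule key[OF WP3_H1 WP3_u WP3_H1 WP3_u, of "tr 2 3"])
   apply (unfold GL_def Y_def[symmetric]; intro gen_group.gen_one gen_group.gen_mult gen_group.gen_base; simp)
  unfolding WP3_def WP3_def by (rule mateq) (simp add: algebra_simps)
lemma c_a4_P4: "act (tr 5 6) (lcoset (Plain 4)) = lcoset (Plain 5)"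
  apply (rule key[OF WP4_H1 WP4_u WP5_H1 WP5_u, of "mat 1"])
   apply (unfold GL_def Y_def[symmetric]; intro gen_group.gen_one gen_group.gen_mult gen_group.gen_base; simp)
  unfolding WP4_def WP5_def by (rule mateq) (simp add: algebra_simps)
lemma c_a4_P5: "act (tr 5 6) (lcoset (Plain 5)) = lcoset (Plain 4)"
  apply (rule key[OF WP5_H1 WP5_u WP4_H1 WP4_u, of "mat 1"])
   apply (unfold GL_def Y_def[symmetric]; intro gen_group.gen_one gen_group.gen_mult gen_group.gen_base; simp)
  unfolding WP5_def WP4_def by (rule mateq) (simp add: algebra_simps)
lemma c_a4_P6: "act (tr 5 6) (lcoset (Plain 6)) = lcoset (Plain 6)"
  apply (rule key[OF WP6_H1 WP6_u WP6_H1 WP6_u, of "tr 6 7"])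
   apply (unfold GL_def Y_def[symmetric]; intro gen_group.gen_one gen_group.gen_mult gen_group.gen_base; simp)
  unfolding WP6_def WP6_def by (rule mateq) (simp add: algebra_simps)
lemma c_a4_B1: "act (tr 5 6) (lcoset (Bar 1)) = lcoset (Bar 1)"
  apply (rule key[OF WB1_H1 WB1_u WB1_H1 WB1_u, of "tr 2 3"])
   apply (unfold GL_def Y_def[symmetric]; intro gen_group.gen_one gen_group.gen_mult gen_group.gen_base; simp)
  unfolding WB1_def WB1_def by (rule mateq) (simp add: algebra_simps)
lemma c_a4_B2: "act (tr 5 6) (lcoset (Bar 2)) = lcoset (Bar 2)"
  apply (rule key[OF WB2_H1 WB2_u WB2_H1 WB2_u, of "tr 2 3"])
   apply (unfold GL_def Y_def[symmetric]; intro gen_group.gen_one gen_group.gen_mult gen_group.gen_base; simp)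
  unfolding WB2_def WB2_def by (rule mateq) (simp add: algebra_simps)
lemma c_a4_B3: "act (tr 5 6) (lcoset (Bar 3)) = lcoset (Bar 3)"
  apply (rule key[OF WB3_H1 WB3_u WB3_H1 WB3_u, of "tr 2 3"])
   apply (unfold GL_def Y_def[symmetric]; intro gen_group.gen_one gen_group.gen_mult gen_group.gen_base; simp)
  unfolding WB3_def WB3_def by (rule mateq) (simp add: algebra_simps)
lemma c_a4_B4: "act (tr 5 6) (lcoset (Bar 4)) = lcoset (Bar 5)"
  apply (rule key[OF WB4_H1 WB4_u WB5_H1 WB5_u, of "mat 1"])
   apply (unfold GL_def Y_def[symmetric]; intro gen_group.gen_one gen_group.gen_mult gen_group.gen_base; simp)
  unfolding WB4_def WB5_def by (rule mateq) (simp add: algebra_simps)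
lemma c_a4_B5: "act (tr 5 6) (lcoset (Bar 5)) = lcoset (Bar 4)"
  apply (rule key[OF WB5_H1 WB5_u WB4_H1 WB4_u, of "mat 1"])
   apply (unfold GL_def Y_def[symmetric]; intro gen_group.gen_one gen_group.gen_mult gen_group.gen_base; simp)
  unfolding WB5_def WB4_def by (rule mateq) (simp add: algebra_simps)
lemma c_a4_B6: "act (tr 5 6) (lcoset (Bar 6)) = lcoset (Bar 6)"
  apply (rule key[OF WB6_H1 WB6_u WB6_H1 WB6_u, of "tr 6 7"])
   apply (unfold GL_def Y_def[symmetric]; intro gen_group.gen_one gen_group.gen_mult gen_group.gen_base; simp)
  unfolding WB6_def WB6_def by (rule mateq) (simp add: algebra_simps)
lemma c_a5_P1: "act (tr 6 7) (lcoset (Plain 1)) = lcoset (Plain 1)"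
  apply (rule key[OF WP1_H1 WP1_u WP1_H1 WP1_u, of "tr 3 4"])
   apply (unfold GL_def Y_def[symmetric]; intro gen_group.gen_one gen_group.gen_mult gen_group.gen_base; simp)
  unfolding WP1_def WP1_def by (rule mateq) (simp add: algebra_simps)
lemma c_a5_P2: "act (tr 6 7) (lcoset (Plain 2)) = lcoset (Plain 2)"
  apply (rule key[OF WP2_H1 WP2_u WP2_H1 WP2_u, of "tr 3 4"])
   apply (unfold GL_def Y_def[symmetric]; intro gen_group.gen_one gen_group.gen_mult gen_group.gen_base; simp)
  unfolding WP2_def WP2_def by (rule mateq) (simp add: algebra_simps)
lemma c_a5_P3: "act (tr 6 7) (lcoset (Plain 3)) = lcoset (Plain 3)"
  apply (rule key[OF WP3_H1 WP3_u WP3_H1 WP3_u, of "tr 3 4"])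
   apply (unfold GL_def Y_def[symmetric]; intro gen_group.gen_one gen_group.gen_mult gen_group.gen_base; simp)
  unfolding WP3_def WP3_def by (rule mateq) (simp add: algebra_simps)
lemma c_a5_P4: "act (tr 6 7) (lcoset (Plain 4)) = lcoset (Plain 4)"
  apply (rule key[OF WP4_H1 WP4_u WP4_H1 WP4_u, of "tr 6 7"])
   apply (unfold GL_def Y_def[symmetric]; intro gen_group.gen_one gen_group.gen_mult gen_group.gen_base; simp)
  unfolding WP4_def WP4_def by (rule mateq) (simp add: algebra_simps)
lemma c_a5_P5: "act (tr 6 7) (lcoset (Plain 5)) = lcoset (Plain 6)"
  apply (rule key[OF WP5_H1 WP5_u WP6_H1 WP6_u, of "tr 6 7"])
   apply (unfold GL_def Y_def[symmetric]; intro gen_group.gen_one gen_group.gen_mult gen_group.gen_base; simp)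
  unfolding WP5_def WP6_def by (rule mateq) (simp add: algebra_simps)
lemma c_a5_P6: "act (tr 6 7) (lcoset (Plain 6)) = lcoset (Plain 5)"
  apply (rule key[OF WP6_H1 WP6_u WP5_H1 WP5_u, of "tr 6 7"])
   apply (unfold GL_def Y_def[symmetric]; intro gen_group.gen_one gen_group.gen_mult gen_group.gen_base; simp)
  unfolding WP6_def WP5_def by (rule mateq) (simp add: algebra_simps)
lemma c_a5_B1: "act (tr 6 7) (lcoset (Bar 1)) = lcoset (Bar 1)"
  apply (rule key[OF WB1_H1 WB1_u WB1_H1 WB1_u, of "tr 3 4"])
   apply (unfold GL_def Y_def[symmetric]; intro gen_group.gen_one gen_group.gen_mult gen_group.gen_base; simp)
  unfolding WB1_def WB1_def by (rule mateq) (simp add: algebra_simps)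
lemma c_a5_B2: "act (tr 6 7) (lcoset (Bar 2)) = lcoset (Bar 2)"
  apply (rule key[OF WB2_H1 WB2_u WB2_H1 WB2_u, of "tr 3 4"])
   apply (unfold GL_def Y_def[symmetric]; intro gen_group.gen_one gen_group.gen_mult gen_group.gen_base; simp)
  unfolding WB2_def WB2_def by (rule mateq) (simp add: algebra_simps)
lemma c_a5_B3: "act (tr 6 7) (lcoset (Bar 3)) = lcoset (Bar 3)"
  apply (rule key[OF WB3_H1 WB3_u WB3_H1 WB3_u, of "tr 3 4"])
   apply (unfold GL_def Y_def[symmetric]; intro gen_group.gen_one gen_group.gen_mult gen_group.gen_base; simp)
  unfolding WB3_def WB3_def by (rule mateq) (simp add: algebra_simps)
lemma c_a5_B4: "act (tr 6 7) (lcoset (Bar 4)) = lcoset (Bar 4)"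
  apply (rule key[OF WB4_H1 WB4_u WB4_H1 WB4_u, of "tr 6 7"])
   apply (unfold GL_def Y_def[symmetric]; intro gen_group.gen_one gen_group.gen_mult gen_group.gen_base; simp)
  unfolding WB4_def WB4_def by (rule mateq) (simp add: algebra_simps)
lemma c_a5_B5: "act (tr 6 7) (lcoset (Bar 5)) = lcoset (Bar 6)"
  apply (rule key[OF WB5_H1 WB5_u WB6_H1 WB6_u, of "tr 6 7"])
   apply (unfold GL_def Y_def[symmetric]; intro gen_group.gen_one gen_group.gen_mult gen_group.gen_base; simp)
  unfolding WB5_def WB6_def by (rule mateq) (simp add: algebra_simps)
lemma c_a5_B6: "act (tr 6 7) (lcoset (Bar 6)) = lcoset (Bar 5)"
  apply (rule key[OF WB6_H1 WB6_u WB5_H1 WB5_u, of "tr 6 7"])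
   apply (unfold GL_def Y_def[symmetric]; intro gen_group.gen_one gen_group.gen_mult gen_group.gen_base; simp)
  unfolding WB6_def WB5_def by (rule mateq) (simp add: algebra_simps)
lemma c_a1p_P1: "act (tr 1 4) (lcoset (Plain 1)) = lcoset (Bar 2)"
  apply (rule key[OF WP1_H1 WP1_u WB2_H1 WB2_u, of "tr 1 2 ** tr 2 3 ** Y ** tr 1 2 ** tr 3 4 ** tr 2 3 ** Y ** tr 3 4"])
   apply (unfold GL_def Y_def[symmetric]; intro gen_group.gen_one gen_group.gen_mult gen_group.gen_base; simp)
  unfolding WP1_def WB2_def by (rule mateq) (simp add: algebra_simps)
lemma c_a1p_P2: "act (tr 1 4) (lcoset (Plain 2)) = lcoset (Bar 1)"
  apply (rule key[OF WP2_H1 WP2_u WB1_H1 WB1_u, of "tr 1 2 ** tr 2 3 ** Y ** tr 1 2 ** tr 3 4 ** tr 2 3 ** Y ** tr 3 4"])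
   apply (unfold GL_def Y_def[symmetric]; intro gen_group.gen_one gen_group.gen_mult gen_group.gen_base; simp)
  unfolding WP2_def WB1_def by (rule mateq) (simp add: algebra_simps)
lemma c_a1p_P3: "act (tr 1 4) (lcoset (Plain 3)) = lcoset (Plain 3)"
  apply (rule key[OF WP3_H1 WP3_u WP3_H1 WP3_u, of "Y ** tr 1 2 ** tr 3 4 ** tr 6 7 ** Y ** tr 1 2 ** tr 3 4 ** tr 6 7 ** Y"])
   apply (unfold GL_def Y_def[symmetric]; intro gen_group.gen_one gen_group.gen_mult gen_group.gen_base; simp)
  unfolding WP3_def WP3_def by (rule mateq) (simp add: algebra_simps)
lemma c_a1p_P4: "act (tr 1 4) (lcoset (Plain 4)) = lcoset (Plain 4)"
  apply (rule key[OF WP4_H1 WP4_u WP4_H1 WP4_u, of "tr 1 2 ** tr 2 3 ** tr 3 4 ** tr 2 3 ** tr 1 2"])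
   apply (unfold GL_def Y_def[symmetric]; intro gen_group.gen_one gen_group.gen_mult gen_group.gen_base; simp)
  unfolding WP4_def WP4_def by (rule mateq) (simp add: algebra_simps)
lemma c_a1p_P5: "act (tr 1 4) (lcoset (Plain 5)) = lcoset (Plain 5)"
  apply (rule key[OF WP5_H1 WP5_u WP5_H1 WP5_u, of "tr 1 2 ** tr 2 3 ** tr 3 4 ** tr 2 3 ** tr 1 2"])
   apply (unfold GL_def Y_def[symmetric]; intro gen_group.gen_one gen_group.gen_mult gen_group.gen_base; simp)
  unfolding WP5_def WP5_def by (rule mateq) (simp add: algebra_simps)
lemma c_a1p_P6: "act (tr 1 4) (lcoset (Plain 6)) = lcoset (Plain 6)"
  apply (rule key[OF WP6_H1 WP6_u WP6_H1 WP6_u, of "tr 1 2 ** tr 2 3 ** tr 3 4 ** tr 2 3 ** tr 1 2"])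
   apply (unfold GL_def Y_def[symmetric]; intro gen_group.gen_one gen_group.gen_mult gen_group.gen_base; simp)
  unfolding WP6_def WP6_def by (rule mateq) (simp add: algebra_simps)
lemma c_a1p_B1: "act (tr 1 4) (lcoset (Bar 1)) = lcoset (Plain 2)"
  apply (rule key[OF WB1_H1 WB1_u WP2_H1 WP2_u, of "tr 1 2 ** tr 2 3 ** Y ** tr 1 2 ** tr 3 4 ** tr 2 3 ** Y ** tr 3 4"])
   apply (unfold GL_def Y_def[symmetric]; intro gen_group.gen_one gen_group.gen_mult gen_group.gen_base; simp)
  unfolding WB1_def WP2_def by (rule mateq) (simp add: algebra_simps)
lemma c_a1p_B2: "act (tr 1 4) (lcoset (Bar 2)) = lcoset (Plain 1)"
  apply (rule key[OF WB2_H1 WB2_u WP1_H1 WP1_u, of "tr 1 2 ** tr 2 3 ** Y ** tr 1 2 ** tr 3 4 ** tr 2 3 ** Y ** tr 3 4"])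
   apply (unfold GL_def Y_def[symmetric]; intro gen_group.gen_one gen_group.gen_mult gen_group.gen_base; simp)
  unfolding WB2_def WP1_def by (rule mateq) (simp add: algebra_simps)
lemma c_a1p_B3: "act (tr 1 4) (lcoset (Bar 3)) = lcoset (Bar 3)"
  apply (rule key[OF WB3_H1 WB3_u WB3_H1 WB3_u, of "Y ** tr 1 2 ** tr 3 4 ** tr 6 7 ** Y ** tr 1 2 ** tr 3 4 ** tr 6 7 ** Y"])
   apply (unfold GL_def Y_def[symmetric]; intro gen_group.gen_one gen_group.gen_mult gen_group.gen_base; simp)
  unfolding WB3_def WB3_def by (rule mateq) (simp add: algebra_simps)
lemma c_a1p_B4: "act (tr 1 4) (lcoset (Bar 4)) = lcoset (Bar 4)"
  apply (rule key[OF WB4_H1 WB4_u WB4_H1 WB4_u, of "tr 1 2 ** tr 2 3 ** tr 3 4 ** tr 2 3 ** tr 1 2"])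
   apply (unfold GL_def Y_def[symmetric]; intro gen_group.gen_one gen_group.gen_mult gen_group.gen_base; simp)
  unfolding WB4_def WB4_def by (rule mateq) (simp add: algebra_simps)
lemma c_a1p_B5: "act (tr 1 4) (lcoset (Bar 5)) = lcoset (Bar 5)"
  apply (rule key[OF WB5_H1 WB5_u WB5_H1 WB5_u, of "tr 1 2 ** tr 2 3 ** tr 3 4 ** tr 2 3 ** tr 1 2"])
   apply (unfold GL_def Y_def[symmetric]; intro gen_group.gen_one gen_group.gen_mult gen_group.gen_base; simp)
  unfolding WB5_def WB5_def by (rule mateq) (simp add: algebra_simps)
lemma c_a1p_B6: "act (tr 1 4) (lcoset (Bar 6)) = lcoset (Bar 6)"
  apply (rule key[OF WB6_H1 WB6_u WB6_H1 WB6_u, of "tr 1 2 ** tr 2 3 ** tr 3 4 ** tr 2 3 ** tr 1 2"])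
   apply (unfold GL_def Y_def[symmetric]; intro gen_group.gen_one gen_group.gen_mult gen_group.gen_base; simp)
  unfolding WB6_def WB6_def by (rule mateq) (simp add: algebra_simps)

lemma labels_cases: "\<sigma> \<in> labels \<Longrightarrow> \<sigma> \<in> {Plain 1, Plain 2, Plain 3, Plain 4, Plain 5, Plain 6, Bar 1, Bar 2, Bar 3, Bar 4, Bar 5, Bar 6}"
  unfolding labels_def by (auto simp: atLeastAtMost_iff; presburger)

lemmas allc = c_a1_P1 c_a1_P2 c_a1_P3 c_a1_P4 c_a1_P5 c_a1_P6 c_a1_B1 c_a1_B2 c_a1_B3 c_a1_B4 c_a1_B5 c_a1_B6 c_a2_P1 c_a2_P2 c_a2_P3 c_a2_P4 c_a2_P5 c_a2_P6 c_a2_B1 c_a2_B2 c_a2_B3 c_a2_B4 c_a2_B5 c_a2_B6 c_a3_P1 c_a3_P2 c_a3_P3 c_a3_P4 c_a3_P5 c_a3_P6 c_a3_B1 c_a3_B2 c_a3_B3 c_a3_B4 c_a3_B5 c_a3_B6 c_a4_P1 c_a4_P2 c_a4_P3 c_a4_P4 c_a4_P5 c_a4_P6 c_a4_B1 c_a4_B2 c_a4_B3 c_a4_B4 c_a4_B5 c_a4_B6 c_a5_P1 c_a5_P2 c_a5_P3 c_a5_P4 c_a5_P5 c_a5_P6 c_a5_B1 c_a5_B2 c_a5_B3 c_a5_B4 c_a5_B5 c_a5_B6 c_a1p_P1 c_a1p_P2 c_a1p_P3 c_a1p_P4 c_a1p_P5 c_a1p_P6 c_a1p_B1 c_a1p_B2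 c_a1p_B3 c_a1p_B4 c_a1p_B5 c_a1p_B6

theorem proposition4p5:
  shows "(\<forall>k\<in>{1..5::nat}.
            act (agen k) (lcoset (Plain k)) = lcoset (Plain (k+1)) \<and>
            act (agen k) (lcoset (Plain (k+1))) = lcoset (Plain k) \<and>
            act (agen k) (lcoset (Bar k)) = lcoset (Bar (k+1)) \<and>
            act (agen k) (lcoset (Bar (k+1))) = lcoset (Bar k) \<and>
            (\<forall>\<sigma>\<in>labels - {Plain k, Plain (k+1), Bar k, Bar (k+1)}.
                act (agen k) (lcoset \<sigma>) = lcoset \<sigma>))
       \<and> act a1' (lcoset (Plain 1)) = lcoset (Bar 2)
       \<and> act a1' (lcoset (Bar 2)) = lcoset (Plain 1)
       \<and> act a1' (lcoset (Bar 1)) = lcoset (Plain 2)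
       \<and> act a1' (lcoset (Plain 2)) = lcoset (Bar 1)
       \<and> (\<forall>\<sigma>\<in>labels - {Plain 1, Bar 2, Bar 1, Plain 2}. act a1' (lcoset \<sigma>) = lcoset \<sigma>)"
proof -
  have lab: "\<sigma> = Plain 1 \<or> \<sigma> = Plain 2 \<or> \<sigma> = Plain 3 \<or> \<sigma> = Plain 4 \<or> \<sigma> = Plain 5 \<or> \<sigma> = Plain 6 \<or>
     \<sigma> = Bar 1 \<or> \<sigma> = Bar 2 \<or> \<sigma> = Bar 3 \<or> \<sigma> = Bar 4 \<or> \<sigma> = Bar 5 \<or> \<sigma> = Bar 6" if "\<sigma> \<in> labels" for \<sigma>
    using labels_cases[OF that] by simp
  have g: "agen 1 = tr 2 3" "agen 2 = tr 3 4" "agen 3 = X1" "agen 4 = tr 5 6" "agen 5 = tr 6 7"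
    by (simp_all add: agen_def)
  have k1: "act (agen 1) (lcoset (Plain 1)) = lcoset (Plain 2) \<and>
            act (agen 1) (lcoset (Plain 2)) = lcoset (Plain 1) \<and>
            act (agen 1) (lcoset (Bar 1)) = lcoset (Bar 2) \<and>
            act (agen 1) (lcoset (Bar 2)) = lcoset (Bar 1) \<and>
            (\<forall>\<sigma>\<in>labels - {Plain 1, Plain 2, Bar 1, Bar 2}.
                act (agen 1) (lcoset \<sigma>) = lcoset \<sigma>)"
    apply (intro conjI ballI)
        apply (simp_all add: g allc g[unfolded One_nat_def] allc[unfolded One_nat_def])
    apply (elim conjE, drule lab)
    apply (elim disjE; simp add: g allc g[unfolded One_nat_def] allc[unfolded One_nat_def])
    done
  have k2: "act (agen 2) (lcoset (Plain 2)) = lcoset (Plain 3) \<and>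
            act (agen 2) (lcoset (Plain 3)) = lcoset (Plain 2) \<and>
            act (agen 2) (lcoset (Bar 2)) = lcoset (Bar 3) \<and>
            act (agen 2) (lcoset (Bar 3)) = lcoset (Bar 2) \<and>
            (\<forall>\<sigma>\<in>labels - {Plain 2, Plain 3, Bar 2, Bar 3}.
                act (agen 2) (lcoset \<sigma>) = lcoset \<sigma>)"
    apply (intro conjI ballI)
        apply (simp_all add: g allc g[unfolded One_nat_def] allc[unfolded One_nat_def])
    apply (elim conjE, drule lab)
    apply (elim disjE; simp add: g allc g[unfolded One_nat_def] allc[unfolded One_nat_def])
    done
  have k3: "act (agen 3) (lcoset (Plain 3)) = lcoset (Plain 4) \<and>
            act (agen 3) (lcoset (Plain 4)) = lcoset (Plain 3) \<and>
            act (agen 3) (lcoset (Bar 3)) = lcoset (Bar 4) \<and>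
            act (agen 3) (lcoset (Bar 4)) = lcoset (Bar 3) \<and>
            (\<forall>\<sigma>\<in>labels - {Plain 3, Plain 4, Bar 3, Bar 4}.
                act (agen 3) (lcoset \<sigma>) = lcoset \<sigma>)"
    apply (intro conjI ballI)
        apply (simp_all add: g allc g[unfolded One_nat_def] allc[unfolded One_nat_def])
    apply (elim conjE, drule lab)
    apply (elim disjE; simp add: g allc g[unfolded One_nat_def] allc[unfolded One_nat_def])
    done
  have k4: "act (agen 4) (lcoset (Plain 4)) = lcoset (Plain 5) \<and>
            act (agen 4) (lcoset (Plain 5)) = lcoset (Plain 4) \<and>
            act (agen 4) (lcoset (Bar 4)) = lcoset (Bar 5) \<and>
            act (agen 4) (lcoset (Bar 5)) = lcoset (Bar 4) \<and>
            (\<forall>\<sigma>\<in>labels - {Plain 4, Plain 5, Bar 4, Bar 5}.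
                act (agen 4) (lcoset \<sigma>) = lcoset \<sigma>)"
    apply (intro conjI ballI)
        apply (simp_all add: g allc g[unfolded One_nat_def] allc[unfolded One_nat_def])
    apply (elim conjE, drule lab)
    apply (elim disjE; simp add: g allc g[unfolded One_nat_def] allc[unfolded One_nat_def])
    done
  have k5: "act (agen 5) (lcoset (Plain 5)) = lcoset (Plain 6) \<and>
            act (agen 5) (lcoset (Plain 6)) = lcoset (Plain 5) \<and>
            act (agen 5) (lcoset (Bar 5)) = lcoset (Bar 6) \<and>
            act (agen 5) (lcoset (Bar 6)) = lcoset (Bar 5) \<and>
            (\<forall>\<sigma>\<in>labels - {Plain 5, Plain 6, Bar 5, Bar 6}.
                act (agen 5) (lcoset \<sigma>) = lcoset \<sigma>)"
    apply (intro conjI ballI)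
        apply (simp_all add: g allc g[unfolded One_nat_def] allc[unfolded One_nat_def])
    apply (elim conjE, drule lab)
    apply (elim disjE; simp add: g allc g[unfolded One_nat_def] allc[unfolded One_nat_def])
    done
  have a: "act a1' (lcoset (Plain 1)) = lcoset (Bar 2)
       \<and> act a1' (lcoset (Bar 2)) = lcoset (Plain 1)
       \<and> act a1' (lcoset (Bar 1)) = lcoset (Plain 2)
       \<and> act a1' (lcoset (Plain 2)) = lcoset (Bar 1)
       \<and> (\<forall>\<sigma>\<in>labels - {Plain 1, Bar 2, Bar 1, Plain 2}. act a1' (lcoset \<sigma>) = lcoset \<sigma>)"
    apply (intro conjI ballI)
        apply (simp_all add: a1'_def allc allc[unfolded One_nat_def])
    apply (elim conjE, drule lab)
    apply (elim disjE; simp add: a1'_def allc allc[unfolded One_nat_def])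
    done
  have "\<forall>k\<in>{1..5::nat}. act (agen k) (lcoset (Plain k)) = lcoset (Plain (k+1)) \<and>
            act (agen k) (lcoset (Plain (k+1))) = lcoset (Plain k) \<and>
            act (agen k) (lcoset (Bar k)) = lcoset (Bar (k+1)) \<and>
            act (agen k) (lcoset (Bar (k+1))) = lcoset (Bar k) \<and>
            (\<forall>\<sigma>\<in>labels - {Plain k, Plain (k+1), Bar k, Bar (k+1)}.
                act (agen k) (lcoset \<sigma>) = lcoset \<sigma>)"
  proof
    fix k :: nat assume "k \<in> {1..5}"
    then consider "k = 1" | "k = 2" | "k = 3" | "k = 4" | "k = 5" by fastforce
    then show "act (agen k) (lcoset (Plain k)) = lcoset (Plain (k+1)) \<and>
            act (agen k) (lcoset (Plain (k+1))) = lcoset (Plain k) \<and>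
            act (agen k) (lcoset (Bar k)) = lcoset (Bar (k+1)) \<and>
            act (agen k) (lcoset (Bar (k+1))) = lcoset (Bar k) \<and>
            (\<forall>\<sigma>\<in>labels - {Plain k, Plain (k+1), Bar k, Bar (k+1)}.
                act (agen k) (lcoset \<sigma>) = lcoset \<sigma>)"
    proof cases
      case 1
      have e: "(1::nat) + 1 = 2" by simp
      show ?thesis using k1 unfolding \<open>k = 1\<close> e .
    next
      case 2
      have e: "(2::nat) + 1 = 3" by simp
      show ?thesis using k2 unfolding \<open>k = 2\<close> e .
    next
      case 3
      have e: "(3::nat) + 1 = 4" by simp
      show ?thesis using k3 unfolding \<open>k = 3\<close> e .
    next
      case 4
      have e: "(4::nat) + 1 = 5" by simp
      show ?thesis using k4 unfolding \<open>k = 4\<close> e .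
    next
      case 5
      have e: "(5::nat) + 1 = 6" by simp
      show ?thesis using k5 unfolding \<open>k = 5\<close> e .
    qed
  qed
  then show ?thesis using a by blast
qed

end
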